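(* Let $\mathcal C$ be a pointed category with finite coproducts and $B\colon\mathcal C\times\mathcal C\to Ab$ a bireduced bifunctor, and let $\Delta\colon\mathcal C\to\mathcal C\times\mathcal C$ be the diagonal functor. Then $T_2(B\circ\Delta)\cong(T_{11}B)\circ\Delta$; more precisely, the natural map $B\Delta\to(T_{11}B)\Delta$ induced by $t_{11}$ factors through $t_2\colon B\Delta\to T_2(B\Delta)$, and the resulting map $T_2(B\Delta)\to(T_{11}B)\Delta$ is a natural isomorphism.
   Context: Notation. $\vee$ is the coproduct, $r_k$ are the retractions of a coproduct, and $\nabla^n\colon X^{\vee n}\to X$ is the folding map. Functors and cross-effects. - A bifunctor $B$ is bireduced if $B(X,0)=B(0,Y)=0$. - For a reduced functor $F\colon\mathcal C\to Ab$: $cr_2F(X,Y)=\ker(F(X\vee Y)\to F(X)\oplus F(Y))$ and $cr_3F(X,Y,Z)=cr_2(cr_2F(-,Z))(X,Y)$. - $T_2F(X)=\mathrm{coker}\big(cr_3F(X,X,X)\subseteq F(X^{\vee3})\xrightarrow{F(\nabla^3)}F(X)\big)$, with projection $t_2$. - $T_{11}B(X,Y)=B(X,Y)/(N_1+N_2)$, where $N_1$ is the image of $cr_2(B(-,Y))(X,X)\subseteq B(X\vee X,Y)$ under $B(\nabla^2,1)$ and $N_2$ the image of $cr_2(B(X,-))(Y,Y)$ under $B(1,\nabla^2)$; $t_{11}$ is the projection. *)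

theory Defs
  imports "HOL-Algebra.Coset"
begin

(* Cmp C g f is the composite  g o f  (first f, then g). *)
record ('o,'m) category =
  Obj   :: "'o set"
  Hom   :: "'o \<Rightarrow> 'o \<Rightarrow> 'm set"
  Cmp   :: "'m \<Rightarrow> 'm \<Rightarrow> 'm"
  Ident :: "'o \<Rightarrow> 'm"

(* Zero: the zero object; Cop X Y = X \<or> Y with injections In1, In2;
   Copair X Y f g : X \<or> Y \<rightarrow> Z for f : X \<rightarrow> Z, g : Y \<rightarrow> Z. *)
record ('o,'m) pcc = "('o,'m) category" +
  Zero   :: "'o"
  Cop    :: "'o \<Rightarrow> 'o \<Rightarrow> 'o"
  In1    :: "'o \<Rightarrow> 'o \<Rightarrow> 'm"
  In2    :: "'o \<Rightarrow> 'o \<Rightarrow> 'm"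
  Copair :: "'o \<Rightarrow> 'o \<Rightarrow> 'm \<Rightarrow> 'm \<Rightarrow> 'm"

definition is_category :: "('o,'m,'x) category_scheme \<Rightarrow> bool" where
  "is_category C \<longleftrightarrow>
     (\<forall>X\<in>Obj C. Ident C X \<in> Hom C X X) \<and>
     (\<forall>X\<in>Obj C. \<forall>Y\<in>Obj C. \<forall>Z\<in>Obj C. \<forall>f\<in>Hom C X Y. \<forall>g\<in>Hom C Y Z.
         Cmp C g f \<in> Hom C X Z) \<and>
     (\<forall>X\<in>Obj C. \<forall>Y\<in>Obj C. \<forall>f\<in>Hom C X Y.
         Cmp C (Ident C Y) f = f \<and> Cmp C f (Ident C X) = f) \<and>
     (\<forall>W\<in>Obj C. \<forall>X\<in>Obj C. \<forall>Y\<in>Obj C. \<forall>Z\<in>Obj C.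
        \<forall>f\<in>Hom C W X. \<forall>g\<in>Hom C X Y. \<forall>h\<in>Hom C Y Z.
         Cmp C h (Cmp C g f) = Cmp C (Cmp C h g) f)"

definition pointed_cat_fin_coprod :: "('o,'m) pcc \<Rightarrow> bool" where
  "pointed_cat_fin_coprod C \<longleftrightarrow>
     is_category C \<and>
     Zero C \<in> Obj C \<and>
     (\<forall>X\<in>Obj C. \<exists>!f. f \<in> Hom C (Zero C) X) \<and>
     (\<forall>X\<in>Obj C. \<exists>!f. f \<in> Hom C X (Zero C)) \<and>
     (\<forall>X\<in>Obj C. \<forall>Y\<in>Obj C.
        Cop C X Y \<in> Obj C \<and>
        In1 C X Y \<in> Hom C X (Cop C X Y) \<and>
        In2 C X Y \<in> Hom C Y (Cop C X Y) \<and>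
        (\<forall>Z\<in>Obj C. \<forall>f\<in>Hom C X Z. \<forall>g\<in>Hom C Y Z.
           Copair C X Y f g \<in> Hom C (Cop C X Y) Z \<and>
           Cmp C (Copair C X Y f g) (In1 C X Y) = f \<and>
           Cmp C (Copair C X Y f g) (In2 C X Y) = g \<and>
           (\<forall>h\<in>Hom C (Cop C X Y) Z.
              Cmp C h (In1 C X Y) = f \<and> Cmp C h (In2 C X Y) = g \<longrightarrow>
              h = Copair C X Y f g)))"

definition zero_mor :: "('o,'m) pcc \<Rightarrow> 'o \<Rightarrow> 'o \<Rightarrow> 'm" where
  "zero_mor C X Y =
     Cmp C (THE f. f \<in> Hom C (Zero C) Y) (THE f. f \<in> Hom C X (Zero C))"

definition retr1 :: "('o,'m) pcc \<Rightarrow> 'o \<Rightarrow> 'o \<Rightarrow> 'm" where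
  "retr1 C X Y = Copair C X Y (Ident C X) (zero_mor C Y X)"

definition retr2 :: "('o,'m) pcc \<Rightarrow> 'o \<Rightarrow> 'o \<Rightarrow> 'm" where
  "retr2 C X Y = Copair C X Y (zero_mor C X Y) (Ident C Y)"

definition fold2 :: "('o,'m) pcc \<Rightarrow> 'o \<Rightarrow> 'm" where
  "fold2 C X = Copair C X X (Ident C X) (Ident C X)"

definition cube :: "('o,'m) pcc \<Rightarrow> 'o \<Rightarrow> 'o" where
  "cube C X = Cop C (Cop C X X) X"

definition fold3 :: "('o,'m) pcc \<Rightarrow> 'o \<Rightarrow> 'm" where
  "fold3 C X = Copair C (Cop C X X) X (fold2 C X) (Ident C X)"

definition copmap :: "('o,'m) pcc \<Rightarrow> 'o \<Rightarrow> 'o \<Rightarrow> 'o \<Rightarrow> 'o \<Rightarrow> 'm \<Rightarrow> 'm \<Rightarrow> 'm" where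
  "copmap C X Y X' Y' f g =
     Copair C X Y (Cmp C (In1 C X' Y') f) (Cmp C (In2 C X' Y') g)"

definition ab_functor ::
  "('o,'m) pcc \<Rightarrow> ('o \<Rightarrow> 'g monoid) \<Rightarrow> ('o \<Rightarrow> 'o \<Rightarrow> 'm \<Rightarrow> 'g \<Rightarrow> 'g) \<Rightarrow> bool" where
  "ab_functor C FO FM \<longleftrightarrow>
     (\<forall>X\<in>Obj C. comm_group (FO X)) \<and>
     (\<forall>X\<in>Obj C. \<forall>Y\<in>Obj C. \<forall>f\<in>Hom C X Y. FM X Y f \<in> hom (FO X) (FO Y)) \<and>
     (\<forall>X\<in>Obj C. \<forall>a\<in>carrier (FO X). FM X X (Ident C X) a = a) \<and>
     (\<forall>X\<in>Obj C. \<forall>Y\<in>Obj C. \<forall>Z\<in>Obj C. \<forall>f\<in>Hom C X Y. \<forall>g\<in>Hom C Y Z.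
        \<forall>a\<in>carrier (FO X). FM X Z (Cmp C g f) a = FM Y Z g (FM X Y f a))"

definition ab_bifunctor ::
  "('o,'m) pcc \<Rightarrow> ('o \<Rightarrow> 'o \<Rightarrow> 'g monoid)
     \<Rightarrow> ('o \<Rightarrow> 'o \<Rightarrow> 'o \<Rightarrow> 'o \<Rightarrow> 'm \<Rightarrow> 'm \<Rightarrow> 'g \<Rightarrow> 'g) \<Rightarrow> bool" where
  "ab_bifunctor C BO BM \<longleftrightarrow>
     (\<forall>X\<in>Obj C. \<forall>Y\<in>Obj C. comm_group (BO X Y)) \<and>
     (\<forall>X\<in>Obj C. \<forall>Y\<in>Obj C. \<forall>X'\<in>Obj C. \<forall>Y'\<in>Obj C.
        \<forall>f\<in>Hom C X X'. \<forall>g\<in>Hom C Y Y'.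
          BM X Y X' Y' f g \<in> hom (BO X Y) (BO X' Y')) \<and>
     (\<forall>X\<in>Obj C. \<forall>Y\<in>Obj C. \<forall>a\<in>carrier (BO X Y).
        BM X Y X Y (Ident C X) (Ident C Y) a = a) \<and>
     (\<forall>X\<in>Obj C. \<forall>Y\<in>Obj C. \<forall>X'\<in>Obj C. \<forall>Y'\<in>Obj C. \<forall>X''\<in>Obj C. \<forall>Y''\<in>Obj C.
        \<forall>f\<in>Hom C X X'. \<forall>g\<in>Hom C Y Y'. \<forall>f'\<in>Hom C X' X''. \<forall>g'\<in>Hom C Y' Y''.
        \<forall>a\<in>carrier (BO X Y).
          BM X Y X'' Y'' (Cmp C f' f) (Cmp C g' g) a
            = BM X' Y' X'' Y'' f' g' (BM X Y X' Y' f g a))"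

definition bireduced :: "('o,'m) pcc \<Rightarrow> ('o \<Rightarrow> 'o \<Rightarrow> 'g monoid) \<Rightarrow> bool" where
  "bireduced C BO \<longleftrightarrow>
     (\<forall>X\<in>Obj C. carrier (BO X (Zero C)) = {one (BO X (Zero C))} \<and>
                carrier (BO (Zero C) X) = {one (BO (Zero C) X)})"

definition diagO :: "('o \<Rightarrow> 'o \<Rightarrow> 'g monoid) \<Rightarrow> 'o \<Rightarrow> 'g monoid" where
  "diagO BO = (\<lambda>X. BO X X)"

definition diagM ::
  "('o \<Rightarrow> 'o \<Rightarrow> 'o \<Rightarrow> 'o \<Rightarrow> 'm \<Rightarrow> 'm \<Rightarrow> 'g \<Rightarrow> 'g) \<Rightarrow> 'o \<Rightarrow> 'o \<Rightarrow> 'm \<Rightarrow> 'g \<Rightarrow> 'g" where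
  "diagM BM = (\<lambda>X Y f. BM X X Y Y f f)"

definition cr2 ::
  "('o,'m) pcc \<Rightarrow> ('o \<Rightarrow> 'g monoid) \<Rightarrow> ('o \<Rightarrow> 'o \<Rightarrow> 'm \<Rightarrow> 'g \<Rightarrow> 'g) \<Rightarrow> 'o \<Rightarrow> 'o \<Rightarrow> 'g set" where
  "cr2 C FO FM X Y =
     {a \<in> carrier (FO (Cop C X Y)).
        FM (Cop C X Y) X (retr1 C X Y) a = one (FO X) \<and>
        FM (Cop C X Y) Y (retr2 C X Y) a = one (FO Y)}"

(* the functor W \<mapsto> cr_2 F(W,Z) (subgroup of F(W \<or> Z)), with maps F(f \<or> 1_Z) *)
definition cr2_obj ::
  "('o,'m) pcc \<Rightarrow> ('o \<Rightarrow> 'g monoid) \<Rightarrow> ('o \<Rightarrow> 'o \<Rightarrow> 'm \<Rightarrow> 'g \<Rightarrow> 'g) \<Rightarrow> 'o \<Rightarrow> 'o \<Rightarrow> 'g monoid" where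
  "cr2_obj C FO FM Z W = (FO (Cop C W Z))\<lparr>carrier := cr2 C FO FM W Z\<rparr>"

definition cr2_mor ::
  "('o,'m) pcc \<Rightarrow> ('o \<Rightarrow> 'o \<Rightarrow> 'm \<Rightarrow> 'g \<Rightarrow> 'g) \<Rightarrow> 'o \<Rightarrow> 'o \<Rightarrow> 'o \<Rightarrow> 'm \<Rightarrow> 'g \<Rightarrow> 'g" where
  "cr2_mor C FM Z W W' f = FM (Cop C W Z) (Cop C W' Z) (copmap C W Z W' Z f (Ident C Z))"

definition cr3 ::
  "('o,'m) pcc \<Rightarrow> ('o \<Rightarrow> 'g monoid) \<Rightarrow> ('o \<Rightarrow> 'o \<Rightarrow> 'm \<Rightarrow> 'g \<Rightarrow> 'g) \<Rightarrow> 'o \<Rightarrow> 'o \<Rightarrow> 'o \<Rightarrow> 'g set" where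
  "cr3 C FO FM X Y Z = cr2 C (cr2_obj C FO FM Z) (cr2_mor C FM Z) X Y"

definition K2 ::
  "('o,'m) pcc \<Rightarrow> ('o \<Rightarrow> 'g monoid) \<Rightarrow> ('o \<Rightarrow> 'o \<Rightarrow> 'm \<Rightarrow> 'g \<Rightarrow> 'g) \<Rightarrow> 'o \<Rightarrow> 'g set" where
  "K2 C FO FM X = FM (cube C X) X (fold3 C X) ` cr3 C FO FM X X X"

definition T2 ::
  "('o,'m) pcc \<Rightarrow> ('o \<Rightarrow> 'g monoid) \<Rightarrow> ('o \<Rightarrow> 'o \<Rightarrow> 'm \<Rightarrow> 'g \<Rightarrow> 'g) \<Rightarrow> 'o \<Rightarrow> 'g set monoid" where
  "T2 C FO FM X = FO X Mod K2 C FO FM X"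

definition t2 ::
  "('o,'m) pcc \<Rightarrow> ('o \<Rightarrow> 'g monoid) \<Rightarrow> ('o \<Rightarrow> 'o \<Rightarrow> 'm \<Rightarrow> 'g \<Rightarrow> 'g) \<Rightarrow> 'o \<Rightarrow> 'g \<Rightarrow> 'g set" where
  "t2 C FO FM X a = r_coset (FO X) (K2 C FO FM X) a"

definition T2_mor ::
  "('o,'m) pcc \<Rightarrow> ('o \<Rightarrow> 'g monoid) \<Rightarrow> ('o \<Rightarrow> 'o \<Rightarrow> 'm \<Rightarrow> 'g \<Rightarrow> 'g)
     \<Rightarrow> 'o \<Rightarrow> 'o \<Rightarrow> 'm \<Rightarrow> 'g set \<Rightarrow> 'g set" where
  "T2_mor C FO FM X Y f K = t2 C FO FM Y (FM X Y f (SOME a. a \<in> K))"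

definition N1 ::
  "('o,'m) pcc \<Rightarrow> ('o \<Rightarrow> 'o \<Rightarrow> 'g monoid)
     \<Rightarrow> ('o \<Rightarrow> 'o \<Rightarrow> 'o \<Rightarrow> 'o \<Rightarrow> 'm \<Rightarrow> 'm \<Rightarrow> 'g \<Rightarrow> 'g) \<Rightarrow> 'o \<Rightarrow> 'o \<Rightarrow> 'g set" where
  "N1 C BO BM X Y =
     BM (Cop C X X) Y X Y (fold2 C X) (Ident C Y) `
       cr2 C (\<lambda>W. BO W Y) (\<lambda>W W' f. BM W Y W' Y f (Ident C Y)) X X"

definition N2 ::
  "('o,'m) pcc \<Rightarrow> ('o \<Rightarrow> 'o \<Rightarrow> 'g monoid)
     \<Rightarrow> ('o \<Rightarrow> 'o \<Rightarrow> 'o \<Rightarrow> 'o \<Rightarrow> 'm \<Rightarrow> 'm \<Rightarrow> 'g \<Rightarrow> 'g) \<Rightarrow> 'o \<Rightarrow> 'o \<Rightarrow> 'g set" where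
  "N2 C BO BM X Y =
     BM X (Cop C Y Y) X Y (Ident C X) (fold2 C Y) `
       cr2 C (\<lambda>W. BO X W) (\<lambda>W W' g. BM X W X W' (Ident C X) g) Y Y"

definition N12 ::
  "('o,'m) pcc \<Rightarrow> ('o \<Rightarrow> 'o \<Rightarrow> 'g monoid)
     \<Rightarrow> ('o \<Rightarrow> 'o \<Rightarrow> 'o \<Rightarrow> 'o \<Rightarrow> 'm \<Rightarrow> 'm \<Rightarrow> 'g \<Rightarrow> 'g) \<Rightarrow> 'o \<Rightarrow> 'o \<Rightarrow> 'g set" where
  "N12 C BO BM X Y = set_mult (BO X Y) (N1 C BO BM X Y) (N2 C BO BM X Y)"

definition T11 ::
  "('o,'m) pcc \<Rightarrow> ('o \<Rightarrow> 'o \<Rightarrow> 'g monoid)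
     \<Rightarrow> ('o \<Rightarrow> 'o \<Rightarrow> 'o \<Rightarrow> 'o \<Rightarrow> 'm \<Rightarrow> 'm \<Rightarrow> 'g \<Rightarrow> 'g) \<Rightarrow> 'o \<Rightarrow> 'o \<Rightarrow> 'g set monoid" where
  "T11 C BO BM X Y = BO X Y Mod N12 C BO BM X Y"

definition t11 ::
  "('o,'m) pcc \<Rightarrow> ('o \<Rightarrow> 'o \<Rightarrow> 'g monoid)
     \<Rightarrow> ('o \<Rightarrow> 'o \<Rightarrow> 'o \<Rightarrow> 'o \<Rightarrow> 'm \<Rightarrow> 'm \<Rightarrow> 'g \<Rightarrow> 'g) \<Rightarrow> 'o \<Rightarrow> 'o \<Rightarrow> 'g \<Rightarrow> 'g set" where
  "t11 C BO BM X Y a = r_coset (BO X Y) (N12 C BO BM X Y) a"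

definition T11_mor ::
  "('o,'m) pcc \<Rightarrow> ('o \<Rightarrow> 'o \<Rightarrow> 'g monoid)
     \<Rightarrow> ('o \<Rightarrow> 'o \<Rightarrow> 'o \<Rightarrow> 'o \<Rightarrow> 'm \<Rightarrow> 'm \<Rightarrow> 'g \<Rightarrow> 'g)
     \<Rightarrow> 'o \<Rightarrow> 'o \<Rightarrow> 'o \<Rightarrow> 'o \<Rightarrow> 'm \<Rightarrow> 'm \<Rightarrow> 'g set \<Rightarrow> 'g set" where
  "T11_mor C BO BM X Y X' Y' f g K = t11 C BO BM X' Y' (BM X Y X' Y' f g (SOME a. a \<in> K))"

end

theory Submission
  imports Defs
begin


lemma hom_inv':
  assumes "h \<in> hom G H" "group G" "group H" "x \<in> carrier G"
  shows "h (inv\<^bsub>G\<^esub> x) = inv\<^bsub>H\<^esub> (h x)"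
  using assms by (intro group_hom.hom_inv) (simp_all add: group_hom_def group_hom_axioms_def)

locale pc =
  fixes C :: "('o,'m) pcc"
  assumes pc: "pointed_cat_fin_coprod C"
begin

lemma cat: "is_category C" using pc by (simp add: pointed_cat_fin_coprod_def)

lemma id_hom[intro]: "X \<in> Obj C \<Longrightarrow> Ident C X \<in> Hom C X X"
  using cat by (simp add: is_category_def)
lemma cmp_hom[intro]: "\<lbrakk>X \<in> Obj C; Y \<in> Obj C; Z \<in> Obj C; f \<in> Hom C X Y; g \<in> Hom C Y Z\<rbrakk> \<Longrightarrow> Cmp C g f \<in> Hom C X Z"
  using cat unfolding is_category_def by blast
lemma id_l: "\<lbrakk>X \<in> Obj C; Y \<in> Obj C; f \<in> Hom C X Y\<rbrakk> \<Longrightarrow> Cmp C (Ident C Y) f = f"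
  using cat unfolding is_category_def by blast
lemma id_r: "\<lbrakk>X \<in> Obj C; Y \<in> Obj C; f \<in> Hom C X Y\<rbrakk> \<Longrightarrow> Cmp C f (Ident C X) = f"
  using cat unfolding is_category_def by blast
lemma assoc: "\<lbrakk>W \<in> Obj C; X \<in> Obj C; Y \<in> Obj C; Z \<in> Obj C; f \<in> Hom C W X; g \<in> Hom C X Y; h \<in> Hom C Y Z\<rbrakk>
   \<Longrightarrow> Cmp C h (Cmp C g f) = Cmp C (Cmp C h g) f"
  using cat unfolding is_category_def by blast

lemma zero_obj[simp]: "Zero C \<in> Obj C" using pc by (simp add: pointed_cat_fin_coprod_def)
lemma cop_obj[simp]: "X \<in> Obj C \<Longrightarrow> Y \<in> Obj C \<Longrightarrow> Cop C X Y \<in> Obj C"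
  using pc by (simp add: pointed_cat_fin_coprod_def)
lemma in1_hom[intro]: "X \<in> Obj C \<Longrightarrow> Y \<in> Obj C \<Longrightarrow> In1 C X Y \<in> Hom C X (Cop C X Y)"
  using pc by (simp add: pointed_cat_fin_coprod_def)
lemma in2_hom[intro]: "X \<in> Obj C \<Longrightarrow> Y \<in> Obj C \<Longrightarrow> In2 C X Y \<in> Hom C Y (Cop C X Y)"
  using pc by (simp add: pointed_cat_fin_coprod_def)
lemma copair_hom[intro]: "\<lbrakk>X \<in> Obj C; Y \<in> Obj C; Z \<in> Obj C; f \<in> Hom C X Z; g \<in> Hom C Y Z\<rbrakk> \<Longrightarrow> Copair C X Y f g \<in> Hom C (Cop C X Y) Z"
  using pc unfolding pointed_cat_fin_coprod_def by blast
lemma copair1: "\<lbrakk>X \<in> Obj C; Y \<in> Obj C; Z \<in> Obj C; f \<in> Hom C X Z; g \<in> Hom C Y Z\<rbrakk> \<Longrightarrow> Cmp C (Copair C X Y f g) (In1 C X Y) = f"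
  using pc unfolding pointed_cat_fin_coprod_def by blast
lemma copair2: "\<lbrakk>X \<in> Obj C; Y \<in> Obj C; Z \<in> Obj C; f \<in> Hom C X Z; g \<in> Hom C Y Z\<rbrakk> \<Longrightarrow> Cmp C (Copair C X Y f g) (In2 C X Y) = g"
  using pc unfolding pointed_cat_fin_coprod_def by blast
lemma copair_uniq: "\<lbrakk>X \<in> Obj C; Y \<in> Obj C; Z \<in> Obj C; h \<in> Hom C (Cop C X Y) Z; h' \<in> Hom C (Cop C X Y) Z;
   Cmp C h (In1 C X Y) = Cmp C h' (In1 C X Y); Cmp C h (In2 C X Y) = Cmp C h' (In2 C X Y)\<rbrakk> \<Longrightarrow> h = h'"
proof -
  assume a: "X \<in> Obj C" "Y \<in> Obj C" "Z \<in> Obj C" "h \<in> Hom C (Cop C X Y) Z" "h' \<in> Hom C (Cop C X Y) Z"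
    "Cmp C h (In1 C X Y) = Cmp C h' (In1 C X Y)" "Cmp C h (In2 C X Y) = Cmp C h' (In2 C X Y)"
  have f: "Cmp C h (In1 C X Y) \<in> Hom C X Z" "Cmp C h (In2 C X Y) \<in> Hom C Y Z" using a cmp_hom cop_obj in1_hom in2_hom by meson+
  have u: "\<forall>k\<in>Hom C (Cop C X Y) Z. Cmp C k (In1 C X Y) = Cmp C h (In1 C X Y) \<and> Cmp C k (In2 C X Y) = Cmp C h (In2 C X Y) \<longrightarrow>
              k = Copair C X Y (Cmp C h (In1 C X Y)) (Cmp C h (In2 C X Y))"
    using pc a(1,2,3) f unfolding pointed_cat_fin_coprod_def by blast
  show "h = h'" using u a by metis
qed

definition zfrom where "zfrom Y = (THE f. f \<in> Hom C (Zero C) Y)"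
definition zto where "zto X = (THE f. f \<in> Hom C X (Zero C))"

lemma zfrom: "Y \<in> Obj C \<Longrightarrow> zfrom Y \<in> Hom C (Zero C) Y \<and> (\<forall>f\<in>Hom C (Zero C) Y. f = zfrom Y)"
  using pc unfolding pointed_cat_fin_coprod_def zfrom_def by (metis (no_types, lifting) theI)
lemma zto: "X \<in> Obj C \<Longrightarrow> zto X \<in> Hom C X (Zero C) \<and> (\<forall>f\<in>Hom C X (Zero C). f = zto X)"
  using pc unfolding pointed_cat_fin_coprod_def zto_def by (metis (no_types, lifting) theI)

lemma zero_mor_eq: "zero_mor C X Y = Cmp C (zfrom Y) (zto X)"
  by (simp add: zero_mor_def zfrom_def zto_def)

lemma zero_hom[intro]: "X \<in> Obj C \<Longrightarrow> Y \<in> Obj C \<Longrightarrow> zero_mor C X Y \<in> Hom C X Y"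
  using zfrom zto zero_mor_eq by (metis cmp_hom zero_obj)

lemma zero_l: "\<lbrakk>X \<in> Obj C; Y \<in> Obj C; Z \<in> Obj C; g \<in> Hom C Y Z\<rbrakk> \<Longrightarrow> Cmp C g (zero_mor C X Y) = zero_mor C X Z"
proof -
  assume a: "X \<in> Obj C" "Y \<in> Obj C" "Z \<in> Obj C" "g \<in> Hom C Y Z"
  have "Cmp C g (zero_mor C X Y) = Cmp C (Cmp C g (zfrom Y)) (zto X)"
    using a zfrom zto assoc[of X "Zero C" Y Z "zto X" "zfrom Y" g] by (simp add: zero_mor_eq)
  also have "Cmp C g (zfrom Y) = zfrom Z" using a zfrom[of Y] zfrom[of Z] cmp_hom zero_obj by meson
  finally show ?thesis by (simp add: zero_mor_eq)
qed

lemma zero_r: "\<lbrakk>X \<in> Obj C; Y \<in> Obj C; Z \<in> Obj C; f \<in> Hom C X Y\<rbrakk> \<Longrightarrow> Cmp C (zero_mor C Y Z) f = zero_mor C X Z"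
proof -
  assume a: "X \<in> Obj C" "Y \<in> Obj C" "Z \<in> Obj C" "f \<in> Hom C X Y"
  have "Cmp C (zero_mor C Y Z) f = Cmp C (zfrom Z) (Cmp C (zto Y) f)"
    using a zfrom zto assoc[of X Y "Zero C" Z f "zto Y" "zfrom Z"] by (simp add: zero_mor_eq)
  also have "Cmp C (zto Y) f = zto X" using a zto[of Y] zto[of X] cmp_hom zero_obj by meson
  finally show ?thesis by (simp add: zero_mor_eq)
qed

end

locale pcX = pc +
  fixes X assumes X[simp]: "X \<in> Obj C"
begin

abbreviation "XX \<equiv> Cop C X X"
abbreviation "U \<equiv> Cop C XX X"
abbreviation "rh1 \<equiv> retr1 C X X"
abbreviation "rh2 \<equiv> retr2 C X X"
abbreviation "io1 \<equiv> In1 C X X"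
abbreviation "io2 \<equiv> In2 C X X"
abbreviation "nb2 \<equiv> fold2 C X"
abbreviation "nb3 \<equiv> fold3 C X"
abbreviation "P \<equiv> retr1 C XX X"
abbreviation "R2 \<equiv> retr2 C XX X"
abbreviation "j \<equiv> In1 C XX X"
abbreviation "i3 \<equiv> In2 C XX X"
abbreviation "q \<equiv> Copair C XX X (Cmp C io1 nb2) io2"
abbreviation "sg1 \<equiv> copmap C XX X X X rh1 (Ident C X)"
abbreviation "sg2 \<equiv> copmap C XX X X X rh2 (Ident C X)"
abbreviation "pi1 \<equiv> Cmp C rh1 P"
abbreviation "pi2 \<equiv> Cmp C rh2 P"
abbreviation "pi3 \<equiv> R2"
abbreviation "I \<equiv> Ident C"
abbreviation "z \<equiv> zero_mor C"

lemma XX[simp]: "XX \<in> Obj C" and U[simp]: "U \<in> Obj C" by auto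

lemma homs[intro,simp]:
  "rh1 \<in> Hom C XX X" "rh2 \<in> Hom C XX X" "io1 \<in> Hom C X XX" "io2 \<in> Hom C X XX"
  "nb2 \<in> Hom C XX X" "nb3 \<in> Hom C U X" "P \<in> Hom C U XX" "R2 \<in> Hom C U X"
  "j \<in> Hom C XX U" "i3 \<in> Hom C X U" "q \<in> Hom C U XX" "sg1 \<in> Hom C U XX" "sg2 \<in> Hom C U XX"
  "pi1 \<in> Hom C U X" "pi2 \<in> Hom C U X"
  "Cmp C io1 rh1 \<in> Hom C XX XX" "Cmp C io1 rh2 \<in> Hom C XX XX" "Cmp C io1 nb2 \<in> Hom C XX XX"
  "Cmp C io2 (I X) \<in> Hom C X XX" "I X \<in> Hom C X X" "I XX \<in> Hom C XX XX" "I U \<in> Hom C U U"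
  "z X X \<in> Hom C X X" "z X XX \<in> Hom C X XX" "z XX X \<in> Hom C XX X"
  by (auto simp: retr1_def retr2_def fold2_def fold3_def copmap_def intro!: copair_hom cmp_hom)

lemma e0[simp]: "Cmp C rh1 io1 = I X"
  unfolding retr1_def using copair1[of X X X] homs homs[unfolded retr1_def] by (simp add: id_r)
lemma e1[simp]: "Cmp C rh1 io2 = z X X"
  unfolding retr1_def using copair2[of X X X] homs homs[unfolded retr1_def] by (simp add: id_r)
lemma e2[simp]: "Cmp C rh2 io1 = z X X"
  unfolding retr2_def using copair1[of X X X] homs homs[unfolded retr2_def] by (simp add: id_r)
lemma e3[simp]: "Cmp C rh2 io2 = I X"
  unfolding retr2_def using copair2[of X X X] homs homs[unfolded retr2_def] by (simp add: id_r)
lemma e4[simp]: "Cmp C nb2 io1 = I X"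
  unfolding fold2_def using copair1[of X X X] homs homs[unfolded fold2_def] by (simp add: id_r)
lemma e5[simp]: "Cmp C nb2 io2 = I X"
  unfolding fold2_def using copair2[of X X X] homs homs[unfolded fold2_def] by (simp add: id_r)
lemma e6[simp]: "Cmp C P j = I XX"
  unfolding retr1_def using copair1[of XX X XX] homs homs[unfolded retr1_def] by (simp add: id_r)
lemma e7[simp]: "Cmp C P i3 = z X XX"
  unfolding retr1_def using copair2[of XX X XX] homs homs[unfolded retr1_def] by (simp add: id_r)
lemma e8[simp]: "Cmp C R2 j = z XX X"
  unfolding retr2_def using copair1[of XX X X] homs homs[unfolded retr2_def] by (simp add: id_r)
lemma e9[simp]: "Cmp C R2 i3 = I X"
  unfolding retr2_def using copair2[of XX X X] homs homs[unfolded retr2_def] by (simp add: id_r)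
lemma e10[simp]: "Cmp C nb3 j = nb2"
  unfolding fold3_def using copair1[of XX X X] homs homs[unfolded fold3_def] by (simp add: id_r)
lemma e11[simp]: "Cmp C nb3 i3 = I X"
  unfolding fold3_def using copair2[of XX X X] homs homs[unfolded fold3_def] by (simp add: id_r)
lemma e12[simp]: "Cmp C sg1 j = Cmp C io1 rh1"
  unfolding copmap_def using copair1[of XX X XX] homs homs[unfolded copmap_def] by (simp add: id_r)
lemma e13[simp]: "Cmp C sg1 i3 = io2"
  unfolding copmap_def using copair2[of XX X XX] homs homs[unfolded copmap_def] id_r[of X XX io2] by simp
lemma e14[simp]: "Cmp C sg2 j = Cmp C io1 rh2"
  unfolding copmap_def using copair1[of XX X XX] homs homs[unfolded copmap_def] by (simp add: id_r)
lemma e15[simp]: "Cmp C sg2 i3 = io2"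
  unfolding copmap_def using copair2[of XX X XX] homs homs[unfolded copmap_def] id_r[of X XX io2] by simp
lemma e16[simp]: "Cmp C q j = Cmp C io1 nb2"
  using copair1[of XX X XX] homs by (simp add: id_r)
lemma e17[simp]: "Cmp C q i3 = io2"
  using copair2[of XX X XX] homs by (simp add: id_r)


lemma d_nb3: "nb3 = Cmp C nb2 q"
proof (rule copair_uniq[of XX X X])
  have "Cmp C (Cmp C nb2 q) j = Cmp C nb2 (Cmp C q j)" using assoc[of XX U XX X j q nb2] by simp
  also have "\<dots> = Cmp C (Cmp C nb2 io1) nb2" using assoc[of XX X XX X nb2 io1 nb2] by simp
  finally show "Cmp C nb3 j = Cmp C (Cmp C nb2 q) j" using id_l[of XX X nb2] by simp
  have "Cmp C (Cmp C nb2 q) i3 = Cmp C nb2 (Cmp C q i3)" using assoc[of X U XX X i3 q nb2] by simp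
  then show "Cmp C nb3 i3 = Cmp C (Cmp C nb2 q) i3" by simp
qed (auto intro: cmp_hom[of U XX X])

lemma d_rq1: "Cmp C rh1 q = Cmp C nb2 P"
proof (rule copair_uniq[of XX X X])
  have "Cmp C (Cmp C rh1 q) j = Cmp C rh1 (Cmp C q j)" using assoc[of XX U XX X j q rh1] by simp
  also have "\<dots> = Cmp C (Cmp C rh1 io1) nb2" using assoc[of XX X XX X nb2 io1 rh1] by simp
  also have "\<dots> = nb2" using id_l[of XX X nb2] by simp
  also have "\<dots> = Cmp C (Cmp C nb2 P) j" using assoc[of XX U XX X j P nb2] id_r[of XX X nb2] by simp
  finally show "Cmp C (Cmp C rh1 q) j = Cmp C (Cmp C nb2 P) j" .
  have "Cmp C (Cmp C rh1 q) i3 = z X X" using assoc[of X U XX X i3 q rh1] by simp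
  also have "\<dots> = Cmp C (Cmp C nb2 P) i3" using assoc[of X U XX X i3 P nb2] zero_l[of X XX X nb2] by simp
  finally show "Cmp C (Cmp C rh1 q) i3 = Cmp C (Cmp C nb2 P) i3" .
qed (auto intro: cmp_hom[of U XX X])

lemma d_rq2: "Cmp C rh2 q = R2"
proof (rule copair_uniq[of XX X X])
  have "Cmp C (Cmp C rh2 q) j = Cmp C rh2 (Cmp C q j)" using assoc[of XX U XX X j q rh2] by simp
  also have "\<dots> = Cmp C (Cmp C rh2 io1) nb2" using assoc[of XX X XX X nb2 io1 rh2] by simp
  also have "\<dots> = z XX X" using zero_r[of XX X X nb2] by simp
  finally show "Cmp C (Cmp C rh2 q) j = Cmp C R2 j" by simp
  have "Cmp C (Cmp C rh2 q) i3 = I X" using assoc[of X U XX X i3 q rh2] by simp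
  then show "Cmp C (Cmp C rh2 q) i3 = Cmp C R2 i3" by simp
qed (auto intro: cmp_hom[of U XX X])

lemma d_s1a: "pi1 = Cmp C rh1 sg1"
proof (rule copair_uniq[of XX X X])
  have "Cmp C pi1 j = rh1" using assoc[of XX U XX X j P rh1] id_r[of XX X rh1] by simp
  also have "\<dots> = Cmp C (Cmp C rh1 sg1) j" using assoc[of XX U XX X j sg1 rh1] assoc[of XX X XX X rh1 io1 rh1] id_l[of XX X rh1] by simp
  finally show "Cmp C pi1 j = Cmp C (Cmp C rh1 sg1) j" .
  have "Cmp C pi1 i3 = z X X" using assoc[of X U XX X i3 P rh1] zero_l[of X XX X rh1] by simp
  also have "\<dots> = Cmp C (Cmp C rh1 sg1) i3" using assoc[of X U XX X i3 sg1 rh1] by simp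
  finally show "Cmp C pi1 i3 = Cmp C (Cmp C rh1 sg1) i3" .
qed (auto intro: cmp_hom[of U XX X])

lemma d_s1b: "R2 = Cmp C rh2 sg1"
proof (rule copair_uniq[of XX X X])
  have "Cmp C (Cmp C rh2 sg1) j = z XX X" using assoc[of XX U XX X j sg1 rh2] assoc[of XX X XX X rh1 io1 rh2] zero_r[of XX X X rh1] by simp
  then show "Cmp C R2 j = Cmp C (Cmp C rh2 sg1) j" by simp
  have "Cmp C (Cmp C rh2 sg1) i3 = I X" using assoc[of X U XX X i3 sg1 rh2] by simp
  then show "Cmp C R2 i3 = Cmp C (Cmp C rh2 sg1) i3" by simp
qed (auto intro: cmp_hom[of U XX X])

lemma d_s2a: "pi2 = Cmp C rh1 sg2"
proof (rule copair_uniq[of XX X X])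
  have "Cmp C pi2 j = rh2" using assoc[of XX U XX X j P rh2] id_r[of XX X rh2] by simp
  also have "\<dots> = Cmp C (Cmp C rh1 sg2) j" using assoc[of XX U XX X j sg2 rh1] assoc[of XX X XX X rh2 io1 rh1] id_l[of XX X rh2] by simp
  finally show "Cmp C pi2 j = Cmp C (Cmp C rh1 sg2) j" .
  have "Cmp C pi2 i3 = z X X" using assoc[of X U XX X i3 P rh2] zero_l[of X XX X rh2] by simp
  also have "\<dots> = Cmp C (Cmp C rh1 sg2) i3" using assoc[of X U XX X i3 sg2 rh1] by simp
  finally show "Cmp C pi2 i3 = Cmp C (Cmp C rh1 sg2) i3" .
qed (auto intro: cmp_hom[of U XX X])

lemma d_s2b: "R2 = Cmp C rh2 sg2"
proof (rule copair_uniq[of XX X X])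
  have "Cmp C (Cmp C rh2 sg2) j = z XX X" using assoc[of XX U XX X j sg2 rh2] assoc[of XX X XX X rh2 io1 rh2] zero_r[of XX X X rh2] by simp
  then show "Cmp C R2 j = Cmp C (Cmp C rh2 sg2) j" by simp
  have "Cmp C (Cmp C rh2 sg2) i3 = I X" using assoc[of X U XX X i3 sg2 rh2] by simp
  then show "Cmp C R2 i3 = Cmp C (Cmp C rh2 sg2) i3" by simp
qed (auto intro: cmp_hom[of U XX X])

end


locale bif = pc C for C :: "('o,'m) pcc" +
  fixes BO :: "'o \<Rightarrow> 'o \<Rightarrow> 'g monoid"
    and BM :: "'o \<Rightarrow> 'o \<Rightarrow> 'o \<Rightarrow> 'o \<Rightarrow> 'm \<Rightarrow> 'm \<Rightarrow> 'g \<Rightarrow> 'g"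
  assumes ab: "ab_bifunctor C BO BM" and br: "bireduced C BO"
begin

lemma cgrp: "X \<in> Obj C \<Longrightarrow> Y \<in> Obj C \<Longrightarrow> comm_group (BO X Y)"
  using ab by (simp add: ab_bifunctor_def)
lemma grp: "X \<in> Obj C \<Longrightarrow> Y \<in> Obj C \<Longrightarrow> group (BO X Y)"
  using cgrp comm_group.axioms(2) by blast
lemma bmhom: "\<lbrakk>X \<in> Obj C; Y \<in> Obj C; X' \<in> Obj C; Y' \<in> Obj C; f \<in> Hom C X X'; g \<in> Hom C Y Y'\<rbrakk>
   \<Longrightarrow> BM X Y X' Y' f g \<in> hom (BO X Y) (BO X' Y')"
proof -
  assume a: "X \<in> Obj C" "Y \<in> Obj C" "X' \<in> Obj C" "Y' \<in> Obj C" "f \<in> Hom C X X'" "g \<in> Hom C Y Y'"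
  have "\<forall>X\<in>Obj C. \<forall>Y\<in>Obj C. \<forall>X'\<in>Obj C. \<forall>Y'\<in>Obj C.
        \<forall>f\<in>Hom C X X'. \<forall>g\<in>Hom C Y Y'.
          BM X Y X' Y' f g \<in> hom (BO X Y) (BO X' Y')" using ab unfolding ab_bifunctor_def by (elim conjE)
  from this[rule_format, OF a] show ?thesis .
qed
lemma bmc[simp]: "\<lbrakk>X \<in> Obj C; Y \<in> Obj C; X' \<in> Obj C; Y' \<in> Obj C; f \<in> Hom C X X'; g \<in> Hom C Y Y'; a \<in> carrier (BO X Y)\<rbrakk>
   \<Longrightarrow> BM X Y X' Y' f g a \<in> carrier (BO X' Y')"
  by (rule hom_in_carrier[OF bmhom])
lemma bmm: "\<lbrakk>X \<in> Obj C; Y \<in> Obj C; X' \<in> Obj C; Y' \<in> Obj C; f \<in> Hom C X X'; g \<in> Hom C Y Y'; a \<in> carrier (BO X Y); b \<in> carrier (BO X Y)\<rbrakk>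
   \<Longrightarrow> BM X Y X' Y' f g (a \<otimes>\<^bsub>BO X Y\<^esub> b) = BM X Y X' Y' f g a \<otimes>\<^bsub>BO X' Y'\<^esub> BM X Y X' Y' f g b"
  by (rule hom_mult[OF bmhom])
lemma bm1: "\<lbrakk>X \<in> Obj C; Y \<in> Obj C; X' \<in> Obj C; Y' \<in> Obj C; f \<in> Hom C X X'; g \<in> Hom C Y Y'\<rbrakk>
   \<Longrightarrow> BM X Y X' Y' f g (one (BO X Y)) = one (BO X' Y')"
  using hom_one[OF bmhom grp grp] by blast
lemma bmi: "\<lbrakk>X \<in> Obj C; Y \<in> Obj C; X' \<in> Obj C; Y' \<in> Obj C; f \<in> Hom C X X'; g \<in> Hom C Y Y'; a \<in> carrier (BO X Y)\<rbrakk>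
   \<Longrightarrow> BM X Y X' Y' f g (inv\<^bsub>BO X Y\<^esub> a) = inv\<^bsub>BO X' Y'\<^esub> (BM X Y X' Y' f g a)"
  using hom_inv'[OF bmhom grp grp] by blast
lemma bmcomp: "\<lbrakk>X \<in> Obj C; Y \<in> Obj C; X' \<in> Obj C; Y' \<in> Obj C; X'' \<in> Obj C; Y'' \<in> Obj C;
   f \<in> Hom C X X'; g \<in> Hom C Y Y'; f' \<in> Hom C X' X''; g' \<in> Hom C Y' Y''; a \<in> carrier (BO X Y)\<rbrakk>
   \<Longrightarrow> BM X' Y' X'' Y'' f' g' (BM X Y X' Y' f g a) = BM X Y X'' Y'' (Cmp C f' f) (Cmp C g' g) a"
proof -
  assume a: "X \<in> Obj C" "Y \<in> Obj C" "X' \<in> Obj C" "Y' \<in> Obj C" "X'' \<in> Obj C" "Y'' \<in> Obj C"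
   "f \<in> Hom C X X'" "g \<in> Hom C Y Y'" "f' \<in> Hom C X' X''" "g' \<in> Hom C Y' Y''" "a \<in> carrier (BO X Y)"
  have "\<forall>X\<in>Obj C. \<forall>Y\<in>Obj C. \<forall>X'\<in>Obj C. \<forall>Y'\<in>Obj C. \<forall>X''\<in>Obj C. \<forall>Y''\<in>Obj C.
        \<forall>f\<in>Hom C X X'. \<forall>g\<in>Hom C Y Y'. \<forall>f'\<in>Hom C X' X''. \<forall>g'\<in>Hom C Y' Y''.
        \<forall>a\<in>carrier (BO X Y).
          BM X Y X'' Y'' (Cmp C f' f) (Cmp C g' g) a
            = BM X' Y' X'' Y'' f' g' (BM X Y X' Y' f g a)" using ab unfolding ab_bifunctor_def by (elim conjE)
  from this[rule_format, OF a] show ?thesis by simp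
qed

lemma bmid: "\<lbrakk>X \<in> Obj C; Y \<in> Obj C; a \<in> carrier (BO X Y)\<rbrakk> \<Longrightarrow> BM X Y X Y (Ident C X) (Ident C Y) a = a"
  using ab unfolding ab_bifunctor_def by blast

lemma bmcL: "\<lbrakk>X \<in> Obj C; Y \<in> Obj C; X' \<in> Obj C; Y' \<in> Obj C; X'' \<in> Obj C;
   f \<in> Hom C X X'; g \<in> Hom C Y Y'; f' \<in> Hom C X' X''; a \<in> carrier (BO X Y)\<rbrakk>
   \<Longrightarrow> BM X' Y' X'' Y' f' (Ident C Y') (BM X Y X' Y' f g a) = BM X Y X'' Y' (Cmp C f' f) g a"
  by (subst bmcomp) (auto simp: id_l)

lemma bmz2: "\<lbrakk>X \<in> Obj C; Y \<in> Obj C; X' \<in> Obj C; Y' \<in> Obj C; f \<in> Hom C X X'; a \<in> carrier (BO X Y)\<rbrakk>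
   \<Longrightarrow> BM X Y X' Y' f (zero_mor C Y Y') a = one (BO X' Y')"
proof -
  assume a: "X \<in> Obj C" "Y \<in> Obj C" "X' \<in> Obj C" "Y' \<in> Obj C" "f \<in> Hom C X X'" "a \<in> carrier (BO X Y)"
  have h: "zto Y \<in> Hom C Y (Zero C)" "zfrom Y' \<in> Hom C (Zero C) Y'" using zto zfrom a by auto
  have "BM X Y X' Y' f (zero_mor C Y Y') a = BM X Y X' Y' (Cmp C f (Ident C X)) (Cmp C (zfrom Y') (zto Y)) a"
    using a id_r zero_mor_eq by simp
  also have "\<dots> = BM X (Zero C) X' Y' f (zfrom Y') (BM X Y X (Zero C) (Ident C X) (zto Y) a)"
    using a h by (subst bmcomp) auto
  also have "BM X Y X (Zero C) (Ident C X) (zto Y) a = one (BO X (Zero C))"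
    using br a h bmc[of X Y X "Zero C" "Ident C X" "zto Y" a] unfolding bireduced_def by auto
  finally show ?thesis using a h bm1 by auto
qed

lemma bmz1: "\<lbrakk>X \<in> Obj C; Y \<in> Obj C; X' \<in> Obj C; Y' \<in> Obj C; g \<in> Hom C Y Y'; a \<in> carrier (BO X Y)\<rbrakk>
   \<Longrightarrow> BM X Y X' Y' (zero_mor C X X') g a = one (BO X' Y')"
proof -
  assume a: "X \<in> Obj C" "Y \<in> Obj C" "X' \<in> Obj C" "Y' \<in> Obj C" "g \<in> Hom C Y Y'" "a \<in> carrier (BO X Y)"
  have h: "zto X \<in> Hom C X (Zero C)" "zfrom X' \<in> Hom C (Zero C) X'" using zto zfrom a by auto
  have "BM X Y X' Y' (zero_mor C X X') g a = BM X Y X' Y' (Cmp C (zfrom X') (zto X)) (Cmp C g (Ident C Y)) a"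
    using a id_r zero_mor_eq by simp
  also have "\<dots> = BM (Zero C) Y X' Y' (zfrom X') g (BM X Y (Zero C) Y (zto X) (Ident C Y) a)"
    using a h by (subst bmcomp) auto
  also have "BM X Y (Zero C) Y (zto X) (Ident C Y) a = one (BO (Zero C) Y)"
    using br a h bmc[of X Y "Zero C" Y "zto X" "Ident C Y" a] unfolding bireduced_def by auto
  finally show ?thesis using a h bm1 by auto
qed

end


lemma swap_bif:
  assumes "bif C BO BM"
  shows "bif C (\<lambda>X Y. BO Y X) (\<lambda>X Y X' Y' f g. BM Y X Y' X' g f)"
proof -
  interpret bif C BO BM by fact
  show ?thesis
  proof (unfold_locales)
    show "ab_bifunctor C (\<lambda>X Y. BO Y X) (\<lambda>X Y X' Y' f g. BM Y X Y' X' g f)"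
      unfolding ab_bifunctor_def
      by (intro conjI ballI) (simp_all add: cgrp bmhom bmid bmcomp)
    show "bireduced C (\<lambda>X Y. BO Y X)" using br unfolding bireduced_def by simp
  qed
qed



lemma (in comm_group) alg1:
  assumes "B \<in> carrier G" "A1 \<in> carrier G" "A2 \<in> carrier G"
    and "n = B \<otimes> inv A1 \<otimes> inv A2"
  shows "B = n \<otimes> (A1 \<otimes> A2)"
proof -
  have "n = B \<otimes> inv (A1 \<otimes> A2)" using assms by (simp add: inv_mult m_assoc)
  then show ?thesis using assms by (simp add: m_assoc)
qed

locale bifX = bif C BO BM + pcX C X
  for C :: "('o,'m) pcc" and BO :: "'o \<Rightarrow> 'o \<Rightarrow> 'g monoid"
    and BM :: "'o \<Rightarrow> 'o \<Rightarrow> 'o \<Rightarrow> 'o \<Rightarrow> 'm \<Rightarrow> 'm \<Rightarrow> 'g \<Rightarrow> 'g" and X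
begin

declare id_hom[simp]

lemma c3[simp]:
  "Cmp C rh1 (Cmp C io1 rh1) = rh1" "Cmp C rh1 (Cmp C io2 rh2) = z XX X"
  "Cmp C rh2 (Cmp C io1 rh1) = z XX X" "Cmp C rh2 (Cmp C io2 rh2) = rh2"
  "Cmp C nb2 (Cmp C io1 rh1) = rh1" "Cmp C nb2 (Cmp C io2 rh2) = rh2"
  using assoc[of XX X XX X rh1 io1 rh1] assoc[of XX X XX X rh2 io2 rh1]
    assoc[of XX X XX X rh1 io1 rh2] assoc[of XX X XX X rh2 io2 rh2]
    assoc[of XX X XX X rh1 io1 nb2] assoc[of XX X XX X rh2 io2 nb2]
    id_l[of XX X rh1] id_l[of XX X rh2] zero_r[of XX X X rh1] zero_r[of XX X X rh2]
  by simp_all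

lemma homs2[simp]: "Cmp C io2 rh2 \<in> Hom C XX XX"
  by (auto intro: cmp_hom[of XX X XX])

lemma L2:
  assumes Y: "Y \<in> Obj C" and y: "y \<in> carrier (BO XX Y)"
  shows "\<exists>n\<in>N1 C BO BM X Y. BM XX Y X Y nb2 (I Y) y
            = n \<otimes>\<^bsub>BO X Y\<^esub> (BM XX Y X Y rh1 (I Y) y \<otimes>\<^bsub>BO X Y\<^esub> BM XX Y X Y rh2 (I Y) y)"
proof -
  interpret G: comm_group "BO XX Y" using cgrp Y by simp
  interpret H: comm_group "BO X Y" using cgrp Y by simp
  define a1 where "a1 = BM XX Y XX Y (Cmp C io1 rh1) (I Y) y"
  define a2 where "a2 = BM XX Y XX Y (Cmp C io2 rh2) (I Y) y"
  define zz where "zz = y \<otimes>\<^bsub>BO XX Y\<^esub> inv\<^bsub>BO XX Y\<^esub> a1 \<otimes>\<^bsub>BO XX Y\<^esub> inv\<^bsub>BO XX Y\<^esub> a2"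
  have a: "a1 \<in> carrier (BO XX Y)" "a2 \<in> carrier (BO XX Y)" using Y y by (simp_all add: a1_def a2_def)
  have zz: "zz \<in> carrier (BO XX Y)" using a y by (simp add: zz_def)
  have ev: "BM XX Y X Y f (I Y) zz = BM XX Y X Y f (I Y) y \<otimes>\<^bsub>BO X Y\<^esub> inv\<^bsub>BO X Y\<^esub> BM XX Y X Y (Cmp C f (Cmp C io1 rh1)) (I Y) y
      \<otimes>\<^bsub>BO X Y\<^esub> inv\<^bsub>BO X Y\<^esub> BM XX Y X Y (Cmp C f (Cmp C io2 rh2)) (I Y) y"
    if f: "f \<in> Hom C XX X" for f
  proof -
    have "BM XX Y X Y f (I Y) zz = BM XX Y X Y f (I Y) y \<otimes>\<^bsub>BO X Y\<^esub> BM XX Y X Y f (I Y) (inv\<^bsub>BO XX Y\<^esub> a1)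
      \<otimes>\<^bsub>BO X Y\<^esub> BM XX Y X Y f (I Y) (inv\<^bsub>BO XX Y\<^esub> a2)"
      unfolding zz_def using a y f Y by (simp add: bmm)
    also have "\<dots> = BM XX Y X Y f (I Y) y \<otimes>\<^bsub>BO X Y\<^esub> inv\<^bsub>BO X Y\<^esub> BM XX Y X Y f (I Y) a1
      \<otimes>\<^bsub>BO X Y\<^esub> inv\<^bsub>BO X Y\<^esub> BM XX Y X Y f (I Y) a2"
      using a y f Y by (simp add: bmi)
    finally show ?thesis unfolding a1_def a2_def using y f Y by (simp add: bmcL)
  qed
  have z1: "BM XX Y X Y rh1 (I Y) zz = one (BO X Y)" using ev[of rh1] y Y by (simp add: bmz1)
  have z2: "BM XX Y X Y rh2 (I Y) zz = one (BO X Y)" using ev[of rh2] y Y by (simp add: bmz1)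
  have "zz \<in> cr2 C (\<lambda>W. BO W Y) (\<lambda>W W' f. BM W Y W' Y f (Ident C Y)) X X"
    unfolding cr2_def using zz z1 z2 by simp
  then have n: "BM XX Y X Y nb2 (I Y) zz \<in> N1 C BO BM X Y" unfolding N1_def by blast
  have "BM XX Y X Y nb2 (I Y) y = BM XX Y X Y nb2 (I Y) zz \<otimes>\<^bsub>BO X Y\<^esub> (BM XX Y X Y rh1 (I Y) y \<otimes>\<^bsub>BO X Y\<^esub> BM XX Y X Y rh2 (I Y) y)"
    using ev[of nb2] y Y by (intro H.alg1) simp_all
  with n show ?thesis by blast
qed


lemma N1_carr: "Y \<in> Obj C \<Longrightarrow> n \<in> N1 C BO BM X Y \<Longrightarrow> n \<in> carrier (BO X Y)"
  unfolding N1_def cr2_def by auto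

lemma N1_mult:
  assumes Y: "Y \<in> Obj C" and n: "n \<in> N1 C BO BM X Y" and n': "n' \<in> N1 C BO BM X Y"
  shows "n \<otimes>\<^bsub>BO X Y\<^esub> n' \<in> N1 C BO BM X Y"
proof -
  interpret G: comm_group "BO XX Y" using cgrp Y by simp
  interpret H: comm_group "BO X Y" using cgrp Y by simp
  obtain a a' where a: "a \<in> cr2 C (\<lambda>W. BO W Y) (\<lambda>W W' f. BM W Y W' Y f (Ident C Y)) X X"
    and a': "a' \<in> cr2 C (\<lambda>W. BO W Y) (\<lambda>W W' f. BM W Y W' Y f (Ident C Y)) X X"
    and e: "n = BM XX Y X Y nb2 (I Y) a" "n' = BM XX Y X Y nb2 (I Y) a'"
    using n n' unfolding N1_def by blast
  have "a \<otimes>\<^bsub>BO XX Y\<^esub> a' \<in> cr2 C (\<lambda>W. BO W Y) (\<lambda>W W' f. BM W Y W' Y f (Ident C Y)) X X"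
    using a a' Y unfolding cr2_def by (simp add: bmm)
  moreover have "n \<otimes>\<^bsub>BO X Y\<^esub> n' = BM XX Y X Y nb2 (I Y) (a \<otimes>\<^bsub>BO XX Y\<^esub> a')"
    using a a' Y e unfolding cr2_def by (simp add: bmm)
  ultimately show ?thesis unfolding N1_def by blast
qed

lemma E1:
  assumes V: "V \<in> Obj C" and Y: "Y \<in> Obj C" and w: "w \<in> carrier (BO U V)" and g: "g \<in> Hom C V Y"
  shows "\<exists>n\<in>N1 C BO BM X Y. BM U V X Y nb3 g w = n \<otimes>\<^bsub>BO X Y\<^esub>
      (BM U V X Y pi1 g w \<otimes>\<^bsub>BO X Y\<^esub> (BM U V X Y pi2 g w \<otimes>\<^bsub>BO X Y\<^esub> BM U V X Y pi3 g w))"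
proof -
  interpret H: comm_group "BO X Y" using cgrp Y by simp
  define y where "y = BM U V XX Y q g w"
  define y' where "y' = BM U V XX Y P g w"
  have y: "y \<in> carrier (BO XX Y)" "y' \<in> carrier (BO XX Y)" using V Y w g by (simp_all add: y_def y'_def)
  have hq: "Cmp C rh1 q \<in> Hom C U X" "Cmp C rh2 q \<in> Hom C U X" "Cmp C nb2 q \<in> Hom C U X" "Cmp C nb2 P \<in> Hom C U X"
    by (auto intro: cmp_hom[of U XX X])
  have 1: "BM U V X Y nb3 g w = BM XX Y X Y nb2 (I Y) y"
    unfolding y_def using V Y w g by (simp add: bmcL d_nb3[symmetric])
  obtain n1 where n1: "n1 \<in> N1 C BO BM X Y" and
    2: "BM XX Y X Y nb2 (I Y) y = n1 \<otimes>\<^bsub>BO X Y\<^esub> (BM XX Y X Y rh1 (I Y) y \<otimes>\<^bsub>BO X Y\<^esub> BM XX Y X Y rh2 (I Y) y)"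
    using L2[OF Y y(1)] by blast
  have 3: "BM XX Y X Y rh1 (I Y) y = BM XX Y X Y nb2 (I Y) y'"
    unfolding y_def y'_def using V Y w g by (simp add: bmcL d_rq1)
  obtain n2 where n2: "n2 \<in> N1 C BO BM X Y" and
    4: "BM XX Y X Y nb2 (I Y) y' = n2 \<otimes>\<^bsub>BO X Y\<^esub> (BM XX Y X Y rh1 (I Y) y' \<otimes>\<^bsub>BO X Y\<^esub> BM XX Y X Y rh2 (I Y) y')"
    using L2[OF Y y(2)] by blast
  have 5: "BM XX Y X Y rh1 (I Y) y' = BM U V X Y pi1 g w" "BM XX Y X Y rh2 (I Y) y' = BM U V X Y pi2 g w"
    unfolding y'_def using V Y w g by (simp_all add: bmcL)
  have 6: "BM XX Y X Y rh2 (I Y) y = BM U V X Y pi3 g w"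
    unfolding y_def using V Y w g by (simp add: bmcL d_rq2)
  have c: "BM U V X Y pi1 g w \<in> carrier (BO X Y)" "BM U V X Y pi2 g w \<in> carrier (BO X Y)" "BM U V X Y pi3 g w \<in> carrier (BO X Y)"
    using V Y w g by simp_all
  have "BM U V X Y nb3 g w = (n1 \<otimes>\<^bsub>BO X Y\<^esub> n2) \<otimes>\<^bsub>BO X Y\<^esub>
      (BM U V X Y pi1 g w \<otimes>\<^bsub>BO X Y\<^esub> (BM U V X Y pi2 g w \<otimes>\<^bsub>BO X Y\<^esub> BM U V X Y pi3 g w))"
    unfolding 1 2 3 4 5 6 using c N1_carr[OF Y n1] N1_carr[OF Y n2] by (simp add: H.m_ac)
  moreover have "n1 \<otimes>\<^bsub>BO X Y\<^esub> n2 \<in> N1 C BO BM X Y" using N1_mult[OF Y n1 n2] .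
  ultimately show ?thesis by blast
qed


lemma cr3_iff: "c \<in> cr3 C (diagO BO) (diagM BM) X X X \<longleftrightarrow>
   c \<in> carrier (BO U U) \<and> BM U U XX XX P P c = one (BO XX XX) \<and> BM U U X X R2 R2 c = one (BO X X) \<and>
   BM U U XX XX sg1 sg1 c = one (BO XX XX) \<and> BM U U XX XX sg2 sg2 c = one (BO XX XX)"
  by (auto simp: cr3_def cr2_def cr2_obj_def cr2_mor_def diagO_def diagM_def)

lemma K2_eq: "K2 C (diagO BO) (diagM BM) X = BM U U X X nb3 nb3 ` cr3 C (diagO BO) (diagM BM) X X X"
  by (simp add: K2_def cube_def diagM_def)

lemma van_gen:
  assumes W: "W \<in> Obj C" and s: "s \<in> Hom C U W" and c: "c \<in> carrier (BO U U)"
    and e: "BM U U W W s s c = one (BO W W)" and a: "a \<in> Hom C W X" and b: "b \<in> Hom C W X"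
  shows "BM U U X X (Cmp C a s) (Cmp C b s) c = one (BO X X)"
  using bmcomp[of U U W W X X s s a b c, symmetric] e bm1[of W W X X a b] assms by simp

lemma van:
  assumes c: "c \<in> cr3 C (diagO BO) (diagM BM) X X X"
  shows "BM U U X X pi1 pi1 c = one (BO X X)" "BM U U X X pi1 pi2 c = one (BO X X)"
    "BM U U X X pi2 pi1 c = one (BO X X)" "BM U U X X pi2 pi2 c = one (BO X X)"
    "BM U U X X pi1 pi3 c = one (BO X X)" "BM U U X X pi3 pi1 c = one (BO X X)"
    "BM U U X X pi3 pi3 c = one (BO X X)"
    "BM U U X X pi2 pi3 c = one (BO X X)" "BM U U X X pi3 pi2 c = one (BO X X)"
proof -
  note cc = c[unfolded cr3_iff]
  show "BM U U X X pi1 pi1 c = one (BO X X)" "BM U U X X pi1 pi2 c = one (BO X X)"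
    "BM U U X X pi2 pi1 c = one (BO X X)" "BM U U X X pi2 pi2 c = one (BO X X)"
    using cc by (auto intro!: van_gen[of XX P])
  show "BM U U X X pi1 pi3 c = one (BO X X)" "BM U U X X pi3 pi1 c = one (BO X X)"
    "BM U U X X pi3 pi3 c = one (BO X X)"
    using cc van_gen[of XX sg1 c rh1 rh2] van_gen[of XX sg1 c rh2 rh1] van_gen[of XX sg1 c rh2 rh2]
    by (simp_all add: d_s1a[symmetric] d_s1b[symmetric])
  show "BM U U X X pi2 pi3 c = one (BO X X)" "BM U U X X pi3 pi2 c = one (BO X X)"
    using cc van_gen[of XX sg2 c rh1 rh2] van_gen[of XX sg2 c rh2 rh1]
    by (simp_all add: d_s2a[symmetric] d_s2b[symmetric])
qed

lemma K2_mult: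
  assumes k: "k \<in> K2 C (diagO BO) (diagM BM) X" and k': "k' \<in> K2 C (diagO BO) (diagM BM) X"
  shows "k \<otimes>\<^bsub>BO X X\<^esub> k' \<in> K2 C (diagO BO) (diagM BM) X"
proof -
  interpret G: comm_group "BO U U" using cgrp by simp
  interpret G2: comm_group "BO XX XX" using cgrp by simp
  interpret G3: comm_group "BO X X" using cgrp by simp
  obtain c c' where c: "c \<in> cr3 C (diagO BO) (diagM BM) X X X" and c': "c' \<in> cr3 C (diagO BO) (diagM BM) X X X"
    and e: "k = BM U U X X nb3 nb3 c" "k' = BM U U X X nb3 nb3 c'" using k k' unfolding K2_eq by blast
  have "c \<otimes>\<^bsub>BO U U\<^esub> c' \<in> cr3 C (diagO BO) (diagM BM) X X X"
    using c c' unfolding cr3_iff by (simp add: bmm)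
  moreover have "k \<otimes>\<^bsub>BO X X\<^esub> k' = BM U U X X nb3 nb3 (c \<otimes>\<^bsub>BO U U\<^esub> c')"
    using c c' e unfolding cr3_iff by (simp add: bmm)
  ultimately show ?thesis unfolding K2_eq by blast
qed

lemma sub1: "N1 C BO BM X X \<subseteq> K2 C (diagO BO) (diagM BM) X"
proof
  fix n assume "n \<in> N1 C BO BM X X"
  then obtain a where a: "a \<in> cr2 C (\<lambda>W. BO W X) (\<lambda>W W' f. BM W X W' X f (Ident C X)) X X"
    and e: "n = BM XX X X X nb2 (I X) a" unfolding N1_def by blast
  have ac: "a \<in> carrier (BO XX X)" and a1: "BM XX X X X rh1 (I X) a = one (BO X X)"
    and a2: "BM XX X X X rh2 (I X) a = one (BO X X)" using a unfolding cr2_def by auto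
  define c where "c = BM XX X U U j i3 a"
  have cm: "BM U U W W f g c = BM XX X W W (Cmp C f j) (Cmp C g i3) a" if "W \<in> Obj C" "f \<in> Hom C U W" "g \<in> Hom C U W" for W f g
    unfolding c_def using that ac by (simp add: bmcomp)
  have s: "BM XX X XX XX (Cmp C io1 rhk) io2 a = one (BO XX XX)" if "rhk \<in> Hom C XX X" "BM XX X X X rhk (I X) a = one (BO X X)" for rhk
  proof -
    have "BM XX X XX XX (Cmp C io1 rhk) io2 a = BM XX X XX XX (Cmp C io1 rhk) (Cmp C io2 (I X)) a"
      using id_r[of X XX io2] by simp
    also have "\<dots> = BM X X XX XX io1 io2 (BM XX X X X rhk (I X) a)" using that ac bmcomp[of XX X X X XX XX rhk "I X" io1 io2 a] by simp
    finally show ?thesis using that bm1[of X X XX XX io1 io2] by simp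
  qed
  have "c \<in> cr3 C (diagO BO) (diagM BM) X X X"
    unfolding cr3_iff using cm ac s[of rh1] s[of rh2] a1 a2
    by (simp add: c_def bmz1 bmz2)
  moreover have "n = BM U U X X nb3 nb3 c" using cm e by simp
  ultimately show "n \<in> K2 C (diagO BO) (diagM BM) X" unfolding K2_eq by blast
qed


lemma K2_N12: "K2 C (diagO BO) (diagM BM) X = N12 C BO BM X X"
proof -
  have b: "bif C BO BM" by (intro bif.intro bif_axioms.intro pc.intro pc ab br)
  interpret sw: bifX C "\<lambda>X Y. BO Y X" "\<lambda>X Y X' Y' f g. BM Y X Y' X' g f" X
    by (intro bifX.intro swap_bif[OF b] pcX_axioms)
  interpret H: comm_group "BO X X" using cgrp by simp
  have dO: "diagO (\<lambda>X Y. BO Y X) = diagO BO" by (simp add: diagO_def)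
  have dM: "diagM (\<lambda>X Y X' Y' f g. BM Y X Y' X' g f) = diagM BM" by (simp add: diagM_def)
  have nn: "N1 C (\<lambda>X Y. BO Y X) (\<lambda>X Y X' Y' f g. BM Y X Y' X' g f) X X = N2 C BO BM X X"
    by (simp add: N1_def N2_def)
  have sub2: "N2 C BO BM X X \<subseteq> K2 C (diagO BO) (diagM BM) X" using sw.sub1 unfolding dO dM nn .
  have N2_mult: "m \<otimes>\<^bsub>BO X X\<^esub> m' \<in> N2 C BO BM X X" if "m \<in> N2 C BO BM X X" "m' \<in> N2 C BO BM X X" for m m'
    using sw.N1_mult[of X m m'] that unfolding nn by simp
  have N2_carr: "m \<in> carrier (BO X X)" if "m \<in> N2 C BO BM X X" for m
    using sw.N1_carr[of X m] that unfolding nn by simp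
  show ?thesis
  proof
    show "N12 C BO BM X X \<subseteq> K2 C (diagO BO) (diagM BM) X"
      unfolding N12_def set_mult_def using sub1 sub2 K2_mult by blast
  next
    show "K2 C (diagO BO) (diagM BM) X \<subseteq> N12 C BO BM X X"
    proof
      fix k assume "k \<in> K2 C (diagO BO) (diagM BM) X"
      then obtain c where c: "c \<in> cr3 C (diagO BO) (diagM BM) X X X" and e: "k = BM U U X X nb3 nb3 c"
        unfolding K2_eq by blast
      have cc: "c \<in> carrier (BO U U)" using c unfolding cr3_iff by simp
      note vv = van[OF c]
      obtain n1 where n1: "n1 \<in> N1 C BO BM X X" and e1: "BM U U X X nb3 nb3 c = n1 \<otimes>\<^bsub>BO X X\<^esub>
          (BM U U X X pi1 nb3 c \<otimes>\<^bsub>BO X X\<^esub> (BM U U X X pi2 nb3 c \<otimes>\<^bsub>BO X X\<^esub> BM U U X X pi3 nb3 c))"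
        using E1[of U X c nb3] cc by auto
      have sE: "\<exists>m\<in>N2 C BO BM X X. BM U U X X p nb3 c = m \<otimes>\<^bsub>BO X X\<^esub>
          (BM U U X X p pi1 c \<otimes>\<^bsub>BO X X\<^esub> (BM U U X X p pi2 c \<otimes>\<^bsub>BO X X\<^esub> BM U U X X p pi3 c))"
        if "p \<in> Hom C U X" for p
        using sw.E1[of U X c p] cc that unfolding nn by simp
      obtain m1 where m1: "m1 \<in> N2 C BO BM X X" and e2: "BM U U X X pi1 nb3 c = m1"
        using sE[of pi1] vv N2_carr by auto
      obtain m2 where m2: "m2 \<in> N2 C BO BM X X" and e3: "BM U U X X pi2 nb3 c = m2"
        using sE[of pi2] vv N2_carr by auto
      obtain m3 where m3: "m3 \<in> N2 C BO BM X X" and e4: "BM U U X X pi3 nb3 c = m3"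
        using sE[of pi3] vv N2_carr by auto
      have "k = n1 \<otimes>\<^bsub>BO X X\<^esub> (m1 \<otimes>\<^bsub>BO X X\<^esub> (m2 \<otimes>\<^bsub>BO X X\<^esub> m3))"
        using e e1 e2 e3 e4 by simp
      moreover have "m1 \<otimes>\<^bsub>BO X X\<^esub> (m2 \<otimes>\<^bsub>BO X X\<^esub> m3) \<in> N2 C BO BM X X"
        using m1 m2 m3 N2_mult by blast
      ultimately show "k \<in> N12 C BO BM X X" unfolding N12_def set_mult_def using n1 by blast
    qed
  qed
qed

end

theorem proposition2p7:
  fixes C :: "('o,'m) pcc"
    and BO :: "'o \<Rightarrow> 'o \<Rightarrow> 'g monoid"
    and BM :: "'o \<Rightarrow> 'o \<Rightarrow> 'o \<Rightarrow> 'o \<Rightarrow> 'm \<Rightarrow> 'm \<Rightarrow> 'g \<Rightarrow> 'g"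
  assumes "pointed_cat_fin_coprod C"
    and "ab_bifunctor C BO BM"
    and "bireduced C BO"
  shows "\<exists>\<phi>.
    (\<forall>X\<in>Obj C.
       \<phi> X \<in> iso (T2 C (diagO BO) (diagM BM) X) (T11 C BO BM X X) \<and>
       (\<forall>a\<in>carrier (BO X X). \<phi> X (t2 C (diagO BO) (diagM BM) X a) = t11 C BO BM X X a)) \<and>
    (\<forall>X\<in>Obj C. \<forall>Y\<in>Obj C. \<forall>f\<in>Hom C X Y.
       \<forall>K\<in>carrier (T2 C (diagO BO) (diagM BM) X).
         \<phi> Y (T2_mor C (diagO BO) (diagM BM) X Y f K)
           = T11_mor C BO BM X X Y Y f f (\<phi> X K))"
proof -
  have K: "K2 C (diagO BO) (diagM BM) X = N12 C BO BM X X" if "X \<in> Obj C" for X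
    by (rule bifX.K2_N12, intro bifX.intro bif.intro bif_axioms.intro pcX.intro pc.intro pcX_axioms.intro assms that)
  show ?thesis
    by (rule exI[of _ "\<lambda>X. id"])
       (simp add: K[unfolded diagO_def diagM_def] T2_def T11_def t2_def t11_def T2_mor_def T11_mor_def id_iso diagO_def diagM_def)
qed

end
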